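(* Let $\lambda=\frac{10}{9}e^{\frac{2}{3}\pi i}$ and let $F$ be the PMT with regions $R_1=\{z:|z|<\tfrac12\}$, $R_2=\widehat{\mathbb C}\setminus\overline{R_1}$ and component functions $f_1(z)=e^{\frac23\pi i}z$, $f_2(z)=\lambda(1-z)$. Then $0$ is an elliptic fixed point with $R_1$ a rotation domain, $z_0=\frac{\lambda}{\lambda+1}$ is a repelling fixed point, $\alpha(F)=\{z_0\}$, and $F$ is $\alpha$-expanding but not hyperbolic.
   Context: A PMT is a pair $(\{R_k\}_{k=1}^K,F)$ with $R_k$ nonempty, open, connected, pairwise disjoint subsets of $\widehat{\mathbb C}$ bounded by piecewise smooth simple closed curves and with $\bigcup\overline{R_k}=\widehat{\mathbb C}$, and $F|_{R_k}=f_k|_{R_k}$ for Möbius maps $f_k$, $F$ undefined on $B(F)=\bigcup\partial R_k$. $F^{-n}(A)$ is the set of $z$ with $F^j(z)\in R(F)=\bigcup R_k$ for $j<n$ and $F^n(z)\in A$; $\mathcal B(F)=\overline{\bigcup_{n\ge0}F^{-n}(B(F))}$, $\alpha(F)=\mathcal B(F)\setminus\bigcup_{n\ge0}F^{-n}(B(F))$. Periodic point $z$ of period $n$: orbit in $R(F)$, $F^n(z)=z$; classified by the multiplier $m$ of the Möbius composition $M_z=f_{k_n}\circ\cdots\circ f_{k_1}$ along the orbit: identity type if $F^n=\mathrm{id}$ near $z$, otherwise attracting $|m|<1$, repelling $|m|>1$, elliptic $|m|=1,m\ne1$, parabolic $m=1$. A rotation domain is a periodic regular component on which $F^n$ is an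 elliptic Möbius map. $F$ is hyperbolic if it has an attracting periodic point, no elliptic, parabolic or identity periodic points, no ghost-periodic points and no wandering regular components. $F$ is $\alpha$-expanding if there is $N\ge1$ with $|(F^N)'(z)|_s>1$ for all $z\in\alpha(F)$, where $|\cdot|_s$ is the spherical derivative norm and $(F^N)'(z)$ is the derivative at $z$ of the Möbius composition along the orbit of $z$. *)

theory Defs
  imports "HOL-Analysis.Analysis"
begin

text \<open>The Riemann sphere is modelled as complex option: Some z is the finite point z,
  None is the point at infinity.\<close>

type_synonym sphere = "complex option"

definition sphere_open :: "sphere set \<Rightarrow> bool" where
  "sphere_open S \<longleftrightarrow> open {z. Some z \<in> S} \<and>
     (None \<in> S \<longrightarrow> (\<exists>r. \<forall>z. norm z > r \<longrightarrow> Some z \<in> S))"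

definition sphere_top :: "sphere topology" where
  "sphere_top = topology sphere_open"

lemma istopology_sphere_open: "istopology sphere_open"
  unfolding istopology_def
proof (intro conjI allI impI ballI)
  fix S T assume S: "sphere_open S" and T: "sphere_open T"
  show "sphere_open (S \<inter> T)"
  proof -
    have "{z. Some z \<in> S \<inter> T} = {z. Some z \<in> S} \<inter> {z. Some z \<in> T}" by auto
    moreover have "None \<in> S \<inter> T \<longrightarrow> (\<exists>r. \<forall>z. norm z > r \<longrightarrow> Some z \<in> S \<inter> T)"
    proof
      assume "None \<in> S \<inter> T"
      then obtain r1 r2 where "\<forall>z. norm z > r1 \<longrightarrow> Some z \<in> S" "\<forall>z. norm z > r2 \<longrightarrow> Some z \<in> T"
        using S T unfolding sphere_open_def by blast
      then show "\<exists>r. \<forall>z. norm z > r \<longrightarrow> Some z \<in> S \<inter> T"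
        by (intro exI[of _ "max r1 r2"]) auto
    qed
    ultimately show ?thesis using S T unfolding sphere_open_def by auto
  qed
next
  fix K assume K: "\<forall>S\<in>K. sphere_open S"
  have "{z. Some z \<in> \<Union>K} = (\<Union>S\<in>K. {z. Some z \<in> S})" by auto
  moreover have "open (\<Union>S\<in>K. {z. Some z \<in> S})" using K unfolding sphere_open_def by auto
  moreover have "None \<in> \<Union>K \<longrightarrow> (\<exists>r. \<forall>z. norm z > r \<longrightarrow> Some z \<in> \<Union>K)"
    using K unfolding sphere_open_def by blast
  ultimately show "sphere_open (\<Union>K)" unfolding sphere_open_def by simp
qed

lemma openin_sphere_top: "openin sphere_top S \<longleftrightarrow> sphere_open S"
  unfolding sphere_top_def using istopology_sphere_open by (simp add: topology_inverse')

text \<open>A Moebius map is represented by a coefficient quadruple (a,b,c,d) with ad - bc \<noteq> 0,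
  acting by z \<mapsto> (az+b)/(cz+d) on the sphere.\<close>

type_synonym moeb = "complex \<times> complex \<times> complex \<times> complex"

fun moeb_det :: "moeb \<Rightarrow> complex" where
  "moeb_det (a, b, c, d) = a * d - b * c"

fun moeb_app :: "moeb \<Rightarrow> sphere \<Rightarrow> sphere" where
  "moeb_app (a, b, c, d) (Some z) = (if c * z + d = 0 then None else Some ((a * z + b) / (c * z + d)))"
| "moeb_app (a, b, c, d) None = (if c = 0 then None else Some (a / c))"

text \<open>Composition: moeb_comp M N represents M \<circ> N (matrix product).\<close>
fun moeb_comp :: "moeb \<Rightarrow> moeb \<Rightarrow> moeb" where
  "moeb_comp (a, b, c, d) (a', b', c', d') =
     (a * a' + b * c', a * b' + b * d', c * a' + d * c', c * b' + d * d')"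

definition moeb_id :: moeb where "moeb_id = (1, 0, 0, 1)"

text \<open>Complex derivative of a Moebius map at a point, computed in the standard charts
  (identity chart at finite points, u \<mapsto> 1/u at infinity) at the source and at the image.\<close>
fun moeb_loc_deriv :: "moeb \<Rightarrow> sphere \<Rightarrow> complex" where
  "moeb_loc_deriv (a, b, c, d) (Some z) =
     (if c * z + d = 0 then deriv (\<lambda>w. (c * w + d) / (a * w + b)) z
      else deriv (\<lambda>w. (a * w + b) / (c * w + d)) z)"
| "moeb_loc_deriv (a, b, c, d) None =
     (if c = 0 then deriv (\<lambda>u. (c + d * u) / (a + b * u)) 0
      else deriv (\<lambda>u. (a + b * u) / (c + d * u)) 0)"

text \<open>Chart coordinate of a point (0 for infinity, in the chart u \<mapsto> 1/u).\<close>
fun coord :: "sphere \<Rightarrow> complex" where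
  "coord (Some z) = z"
| "coord None = 0"

definition sph_deriv :: "moeb \<Rightarrow> sphere \<Rightarrow> real" where
  "sph_deriv M z = norm (moeb_loc_deriv M z) * (1 + (norm (coord z))\<^sup>2)
                     / (1 + (norm (coord (moeb_app M z)))\<^sup>2)"

definition moeb_multiplier :: "moeb \<Rightarrow> sphere \<Rightarrow> complex" where
  "moeb_multiplier M z = moeb_loc_deriv M z"

text \<open>Elliptic Moebius map: not the identity and conjugate to a rotation, i.e.
  trace^2/det is real and lies in [0,4).\<close>
fun moeb_elliptic :: "moeb \<Rightarrow> bool" where
  "moeb_elliptic (a, b, c, d) \<longleftrightarrow> a * d - b * c \<noteq> 0 \<and>
     (\<exists>t::real. (a + d)\<^sup>2 / (a * d - b * c) = complex_of_real t \<and> 0 \<le> t \<and> t < 4)"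

type_synonym pmt = "(sphere set \<times> moeb) list"

definition pmt_R :: "pmt \<Rightarrow> sphere set" where
  "pmt_R F = (\<Union>k<length F. fst (F ! k))"

definition pmt_B :: "pmt \<Rightarrow> sphere set" where
  "pmt_B F = (\<Union>k<length F. sphere_top frontier_of (fst (F ! k)))"

definition pmt_idx :: "pmt \<Rightarrow> sphere \<Rightarrow> nat" where
  "pmt_idx F w = (THE k. k < length F \<and> w \<in> fst (F ! k))"

definition pmt_map :: "pmt \<Rightarrow> sphere \<Rightarrow> moeb" where
  "pmt_map F w = snd (F ! pmt_idx F w)"

definition pmt_step :: "pmt \<Rightarrow> sphere \<Rightarrow> sphere option" where
  "pmt_step F w = (if w \<in> pmt_R F then Some (moeb_app (pmt_map F w) w) else None)"

fun pmt_iter :: "pmt \<Rightarrow> nat \<Rightarrow> sphere \<Rightarrow> sphere option" where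
  "pmt_iter F 0 z = Some z"
| "pmt_iter F (Suc n) z = (case pmt_iter F n z of None \<Rightarrow> None | Some w \<Rightarrow> pmt_step F w)"

definition pmt_preim :: "pmt \<Rightarrow> nat \<Rightarrow> sphere set \<Rightarrow> sphere set" where
  "pmt_preim F n A = {z. \<exists>w\<in>A. pmt_iter F n z = Some w}"

definition pmt_img :: "pmt \<Rightarrow> nat \<Rightarrow> sphere set \<Rightarrow> sphere set" where
  "pmt_img F n U = {w. \<exists>z\<in>U. pmt_iter F n z = Some w}"

definition pmt_calB :: "pmt \<Rightarrow> sphere set" where
  "pmt_calB F = sphere_top closure_of (\<Union>n. pmt_preim F n (pmt_B F))"

definition pmt_alpha :: "pmt \<Rightarrow> sphere set" where
  "pmt_alpha F = pmt_calB F - (\<Union>n. pmt_preim F n (pmt_B F))"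

fun pmt_orbit_moeb :: "pmt \<Rightarrow> nat \<Rightarrow> sphere \<Rightarrow> moeb" where
  "pmt_orbit_moeb F 0 z = moeb_id"
| "pmt_orbit_moeb F (Suc n) z = moeb_comp (pmt_map F (the (pmt_iter F n z))) (pmt_orbit_moeb F n z)"

definition orbit_in_R :: "pmt \<Rightarrow> nat \<Rightarrow> sphere \<Rightarrow> bool" where
  "orbit_in_R F n z \<longleftrightarrow> (\<forall>j<n. \<exists>w. pmt_iter F j z = Some w \<and> w \<in> pmt_R F)"

definition periodic_point :: "pmt \<Rightarrow> sphere \<Rightarrow> nat \<Rightarrow> bool" where
  "periodic_point F z n \<longleftrightarrow> n \<ge> 1 \<and> orbit_in_R F n z \<and> pmt_iter F n z = Some z \<and>
     (\<forall>m. 1 \<le> m \<and> m < n \<longrightarrow> pmt_iter F m z \<noteq> Some z)"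

definition pp_multiplier :: "pmt \<Rightarrow> sphere \<Rightarrow> nat \<Rightarrow> complex" where
  "pp_multiplier F z n = moeb_multiplier (pmt_orbit_moeb F n z) z"

definition identity_type :: "pmt \<Rightarrow> sphere \<Rightarrow> nat \<Rightarrow> bool" where
  "identity_type F z n \<longleftrightarrow> periodic_point F z n \<and>
     (\<exists>U. openin sphere_top U \<and> z \<in> U \<and> (\<forall>w\<in>U. pmt_iter F n w = Some w))"

definition attracting_pp :: "pmt \<Rightarrow> sphere \<Rightarrow> nat \<Rightarrow> bool" where
  "attracting_pp F z n \<longleftrightarrow> periodic_point F z n \<and> \<not> identity_type F z n \<and>
     norm (pp_multiplier F z n) < 1"

definition repelling_pp :: "pmt \<Rightarrow> sphere \<Rightarrow> nat \<Rightarrow> bool" where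
  "repelling_pp F z n \<longleftrightarrow> periodic_point F z n \<and> \<not> identity_type F z n \<and>
     norm (pp_multiplier F z n) > 1"

definition elliptic_pp :: "pmt \<Rightarrow> sphere \<Rightarrow> nat \<Rightarrow> bool" where
  "elliptic_pp F z n \<longleftrightarrow> periodic_point F z n \<and> \<not> identity_type F z n \<and>
     norm (pp_multiplier F z n) = 1 \<and> pp_multiplier F z n \<noteq> 1"

definition parabolic_pp :: "pmt \<Rightarrow> sphere \<Rightarrow> nat \<Rightarrow> bool" where
  "parabolic_pp F z n \<longleftrightarrow> periodic_point F z n \<and> \<not> identity_type F z n \<and>
     pp_multiplier F z n = 1"

text \<open>Ghost-periodic point (not defined in the given context):
  a point whose orbit, continued at points of B(F) by any of the maps of the adjacent
  regions (continuous extension from the closures), returns to it and meets B(F).\<close>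
definition ghost_periodic :: "pmt \<Rightarrow> sphere \<Rightarrow> bool" where
  "ghost_periodic F z \<longleftrightarrow> (\<exists>n\<ge>1. \<exists>ks::nat\<Rightarrow>nat. \<exists>zs::nat\<Rightarrow>sphere.
     zs 0 = z \<and> zs n = z \<and>
     (\<forall>j<n. ks j < length F \<and> zs j \<in> sphere_top closure_of (fst (F ! ks j)) \<and>
            zs (Suc j) = moeb_app (snd (F ! ks j)) (zs j)) \<and>
     (\<exists>j<n. zs j \<in> pmt_B F))"

definition regular_set :: "pmt \<Rightarrow> sphere set" where
  "regular_set F = UNIV - pmt_calB F"

definition regular_components :: "pmt \<Rightarrow> sphere set set" where
  "regular_components F = connected_components_of (subtopology sphere_top (regular_set F))"

definition wandering_component :: "pmt \<Rightarrow> sphere set \<Rightarrow> bool" where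
  "wandering_component F U \<longleftrightarrow> U \<in> regular_components F \<and>
     (\<forall>m n. m \<noteq> n \<longrightarrow> pmt_img F m U \<inter> pmt_img F n U = {})"

definition rotation_domain :: "pmt \<Rightarrow> sphere set \<Rightarrow> bool" where
  "rotation_domain F U \<longleftrightarrow> U \<in> regular_components F \<and>
     (\<exists>n\<ge>1. pmt_img F n U \<subseteq> U \<and> (\<forall>m. 1 \<le> m \<and> m < n \<longrightarrow> \<not> pmt_img F m U \<subseteq> U) \<and>
        (\<exists>M. moeb_elliptic M \<and> (\<forall>z\<in>U. pmt_iter F n z = Some (moeb_app M z))))"

definition pmt_hyperbolic :: "pmt \<Rightarrow> bool" where
  "pmt_hyperbolic F \<longleftrightarrow>
     (\<exists>z n. attracting_pp F z n) \<and>
     (\<forall>z n. \<not> elliptic_pp F z n \<and> \<not> parabolic_pp F z n \<and> \<not> identity_type F z n) \<and>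
     (\<forall>z. \<not> ghost_periodic F z) \<and>
     (\<forall>U. \<not> wandering_component F U)"

definition alpha_expanding :: "pmt \<Rightarrow> bool" where
  "alpha_expanding F \<longleftrightarrow>
     (\<exists>N\<ge>1. \<forall>z\<in>pmt_alpha F. sph_deriv (pmt_orbit_moeb F N z) z > 1)"

definition ex_omega :: complex where "ex_omega = exp (2/3 * pi * \<i>)"
definition ex_lambda :: complex where "ex_lambda = 10/9 * exp (2/3 * pi * \<i>)"

definition ex_R1 :: "sphere set" where "ex_R1 = {Some z | z. norm z < 1/2}"
definition ex_R2 :: "sphere set" where "ex_R2 = UNIV - sphere_top closure_of ex_R1"

text \<open>f_1(z) = e^{2\<pi>i/3} z,  f_2(z) = \<lambda>(1 - z) = (-\<lambda> z + \<lambda>)/1.\<close>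
definition ex_F :: pmt where
  "ex_F = [(ex_R1, (ex_omega, 0, 0, 1)), (ex_R2, (- ex_lambda, ex_lambda, 0, 1))]"

end

theory Submission imports Defs begin

lemma omega_eq: "ex_omega = Complex (-1/2) (sqrt 3/2)"
  unfolding ex_omega_def
  by (simp add: exp_eq_polar cis.ctr cos_120' sin_120' Complex_eq mult.commute)

lemma lambda_eq: "ex_lambda = 10/9 * ex_omega"
  unfolding ex_lambda_def ex_omega_def by simp

lemma omega_norm: "norm ex_omega = 1"
  unfolding omega_eq by (simp add: cmod_def power_divide)

lemma omega_ne1: "ex_omega \<noteq> 1"
  unfolding omega_eq by (simp add: complex_eq_iff)

lemma omega_ne0: "ex_omega \<noteq> 0"
  using omega_norm by auto

lemma omega_sq: "ex_omega^2 + ex_omega + 1 = 0"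
  unfolding omega_eq by (simp add: complex_eq_iff power2_eq_square algebra_simps)

lemma omega_elliptic: "moeb_elliptic (ex_omega, 0, 0, 1)"
proof -
  have "(ex_omega + 1)^2 = ex_omega" using omega_sq by (simp add: power2_eq_square algebra_simps)
  hence "(ex_omega + 1)^2 / (ex_omega * 1 - 0 * 0) = complex_of_real 1" using omega_ne0 by simp
  thus ?thesis using omega_ne0 by (simp del: of_real_1)
qed

lemma lambda_norm: "norm ex_lambda = 10/9"
  unfolding lambda_eq by (simp add: norm_mult omega_norm)

lemma lambda_ne0: "ex_lambda \<noteq> 0" using lambda_norm by auto

lemma lambda1_ne0: "ex_lambda + 1 \<noteq> 0"
proof
  assume "ex_lambda + 1 = 0" hence "ex_lambda = -1" by (simp add: eq_neg_iff_add_eq_0)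
  hence "norm ex_lambda = 1" by (metis norm_minus_cancel norm_one)
  thus False using lambda_norm by simp
qed

definition z0 :: complex where "z0 = ex_lambda / (ex_lambda + 1)"
definition gmap :: "complex \<Rightarrow> complex" where "gmap z = ex_lambda * (1 - z)"

lemma gmap_z0: "gmap z - z0 = - ex_lambda * (z - z0)"
  unfolding gmap_def z0_def using lambda1_ne0 by (simp add: field_simps)

lemma z0_norm: "norm z0 > 1/2"
proof -
  have "norm (ex_lambda + 1) \<le> 19/9" using norm_triangle_ineq[of ex_lambda 1] lambda_norm by simp
  moreover have "norm (ex_lambda + 1) > 0" using lambda1_ne0 by simp
  ultimately show ?thesis unfolding z0_def norm_divide lambda_norm by (simp add: field_simps)
qed

lemma topspace_sphere [simp]: "topspace sphere_top = UNIV"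
proof -
  have "openin sphere_top UNIV" by (simp add: openin_sphere_top sphere_open_def)
  thus ?thesis using openin_subset by blast
qed

lemma R1_mem [simp]: "Some z \<in> ex_R1 \<longleftrightarrow> norm z < 1/2" "None \<notin> ex_R1"
  unfolding ex_R1_def by auto

lemma R1_open: "openin sphere_top ex_R1"
proof -
  have "{z. Some z \<in> ex_R1} = ball 0 (1/2)" by auto
  thus ?thesis by (simp add: openin_sphere_top sphere_open_def)
qed

definition Dset :: "sphere set" where "Dset = {Some z | z. norm z \<le> 1/2}"
definition Cset :: "sphere set" where "Cset = {Some z | z. norm z = 1/2}"

lemma D_mem [simp]: "Some z \<in> Dset \<longleftrightarrow> norm z \<le> 1/2" "None \<notin> Dset"
  unfolding Dset_def by auto
lemma C_mem [simp]: "Some z \<in> Cset \<longleftrightarrow> norm z = 1/2" "None \<notin> Cset"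
  unfolding Cset_def by auto

lemma D_closed: "closedin sphere_top Dset"
proof -
  have "{z. Some z \<in> UNIV - Dset} = - cball 0 (1/2)" by auto
  moreover have "\<forall>z. norm z > 1/2 \<longrightarrow> Some z \<in> UNIV - Dset" by simp
  ultimately have "sphere_open (UNIV - Dset)" unfolding sphere_open_def
    by (metis open_Compl closed_cball)
  thus ?thesis by (simp add: closedin_def openin_sphere_top)
qed

lemma clR1: "sphere_top closure_of ex_R1 = Dset"
proof
  show "sphere_top closure_of ex_R1 \<subseteq> Dset"
    by (rule closure_of_minimal[OF _ D_closed]) (auto simp: ex_R1_def)
  show "Dset \<subseteq> sphere_top closure_of ex_R1"
  proof
    fix p assume "p \<in> Dset"
    then obtain z where p: "p = Some z" and z: "norm z \<le> 1/2" unfolding Dset_def by auto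
    show "p \<in> sphere_top closure_of ex_R1"
      unfolding in_closure_of topspace_sphere
    proof (intro conjI allI impI UNIV_I)
      fix T assume T: "p \<in> T \<and> openin sphere_top T"
      hence "open {w. Some w \<in> T}" "z \<in> {w. Some w \<in> T}"
        using p by (auto simp: openin_sphere_top sphere_open_def)
      then obtain e where e: "e > 0" "ball z e \<subseteq> {w. Some w \<in> T}"
        by (meson openE)
      define s where "s = min e 1 / 2"
      have s: "0 < s" "s < 1" "s < e" using e(1) unfolding s_def by auto
      define w where "w = of_real (1 - s) * z"
      have "z - w = of_real s * z" unfolding w_def by (simp add: algebra_simps)
      hence "dist z w = s * norm z" unfolding dist_norm using s
        by (simp add: norm_mult)
      also have "\<dots> \<le> s * (1/2)" using s z by (intro mult_left_mono) auto
      also have "\<dots> < e" using s by simp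
      finally have "Some w \<in> T" using e(2) by auto
      moreover have "norm w < 1/2"
      proof -
        have "norm w = abs (1 - s) * norm z" unfolding w_def by (simp only: norm_mult norm_of_real)
        hence "norm w = (1 - s) * norm z" using s by simp
        also have "\<dots> \<le> (1 - s) * (1/2)" using s z by (intro mult_left_mono) auto
        also have "\<dots> < 1/2" using s by simp
        finally show ?thesis .
      qed
      ultimately show "\<exists>y. y \<in> ex_R1 \<and> y \<in> T" by (intro exI[of _ "Some w"]) simp
    qed
  qed
qed

lemma R2_eq: "ex_R2 = UNIV - Dset"
  unfolding ex_R2_def clR1 ..

lemma R2_mem [simp]: "Some z \<in> ex_R2 \<longleftrightarrow> norm z > 1/2" "None \<in> ex_R2"
  unfolding R2_eq by auto

lemma R2_open: "openin sphere_top ex_R2"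
  unfolding R2_eq using D_closed by (simp add: closedin_def)

lemma frontier_R1: "sphere_top frontier_of ex_R1 = Cset"
  unfolding frontier_of_def clR1 interior_of_openin[OF R1_open]
  by (auto simp: Dset_def Cset_def)

lemma frontier_R2: "sphere_top frontier_of ex_R2 \<subseteq> Cset"
proof -
  have "sphere_top frontier_of ex_R2 = sphere_top frontier_of Dset"
    unfolding R2_eq using frontier_of_complement[of sphere_top Dset] by simp
  also have "\<dots> = Dset - sphere_top interior_of Dset"
    unfolding frontier_of_def closure_of_closedin[OF D_closed] ..
  also have "\<dots> \<subseteq> Dset - ex_R1"
  proof -
    have "ex_R1 \<subseteq> Dset" by (auto simp: ex_R1_def)
    hence "ex_R1 \<subseteq> sphere_top interior_of Dset" using interior_of_maximal R1_open by blast
    thus ?thesis by blast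
  qed
  also have "\<dots> \<subseteq> Cset" by (auto simp: Dset_def Cset_def)
  finally show ?thesis .
qed

lemma B_eq: "pmt_B ex_F = Cset"
proof -
  have "pmt_B ex_F = sphere_top frontier_of ex_R1 \<union> sphere_top frontier_of ex_R2"
    unfolding pmt_B_def ex_F_def by (auto simp: less_Suc_eq)
  thus ?thesis using frontier_R1 frontier_R2 by auto
qed

lemma R1_R2_disj: "p \<in> ex_R1 \<Longrightarrow> p \<notin> ex_R2"
  by (cases p) auto

lemma pmt_R_eq: "pmt_R ex_F = ex_R1 \<union> ex_R2"
  unfolding pmt_R_def ex_F_def by (auto simp: less_Suc_eq)

lemma idx_R1: "p \<in> ex_R1 \<Longrightarrow> pmt_idx ex_F p = 0"
  unfolding pmt_idx_def
  by (rule the_equality) (auto simp: ex_F_def less_Suc_eq dest: R1_R2_disj)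

lemma idx_R2: "p \<in> ex_R2 \<Longrightarrow> pmt_idx ex_F p = 1"
  unfolding pmt_idx_def
  by (rule the_equality) (auto simp: ex_F_def less_Suc_eq dest: R1_R2_disj)

lemma map_R1: assumes "p \<in> ex_R1" shows "pmt_map ex_F p = (ex_omega, 0, 0, 1)"
  unfolding pmt_map_def idx_R1[OF assms] by (simp add: ex_F_def)

lemma map_R2: assumes "p \<in> ex_R2" shows "pmt_map ex_F p = (- ex_lambda, ex_lambda, 0, 1)"
  unfolding pmt_map_def idx_R2[OF assms] by (simp add: ex_F_def)

lemma step_R1: "norm z < 1/2 \<Longrightarrow> pmt_step ex_F (Some z) = Some (Some (ex_omega * z))"
  unfolding pmt_step_def pmt_R_eq by (simp add: map_R1)

lemma step_R2: "norm z > 1/2 \<Longrightarrow> pmt_step ex_F (Some z) = Some (Some (gmap z))"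
  unfolding pmt_step_def pmt_R_eq by (simp add: map_R2 gmap_def algebra_simps)

lemma step_None: "pmt_step ex_F None = Some None"
  unfolding pmt_step_def pmt_R_eq by (simp add: map_R2)

lemma step_C: "norm z = 1/2 \<Longrightarrow> pmt_step ex_F (Some z) = None"
  unfolding pmt_step_def pmt_R_eq by simp

lemma iter_Suc_front:
  "pmt_iter F (Suc n) z = (case pmt_step F z of None \<Rightarrow> None | Some w \<Rightarrow> pmt_iter F n w)"
proof (induction n arbitrary: z)
  case 0
  then show ?case by (simp split: option.split)
next
  case (Suc n)
  show ?case
    by (subst pmt_iter.simps(2), subst Suc.IH) (simp split: option.split)
qed

declare pmt_iter.simps(2)[simp del]

definition good :: "sphere \<Rightarrow> bool" where
  "good p \<longleftrightarrow> (\<forall>n. p \<notin> pmt_preim ex_F n Cset)"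

lemma good_step:
  assumes "p \<notin> Cset" "pmt_step ex_F p = Some q" "good q"
  shows "good p"
  unfolding good_def
proof
  fix n show "p \<notin> pmt_preim ex_F n Cset"
  proof (cases n)
    case 0 thus ?thesis using assms(1) by (simp add: pmt_preim_def)
  next
    case (Suc m)
    have "q \<notin> pmt_preim ex_F m Cset" using assms(3) good_def by blast
    thus ?thesis using assms(2) Suc by (simp add: pmt_preim_def iter_Suc_front)
  qed
qed

lemma good_step_back:
  assumes "good p" "pmt_step ex_F p = Some q"
  shows "good q"
  unfolding good_def
proof
  fix n
  have "p \<notin> pmt_preim ex_F (Suc n) Cset" using assms(1) good_def by blast
  thus "q \<notin> pmt_preim ex_F n Cset" using assms(2) by (simp add: pmt_preim_def iter_Suc_front)
qed

lemma good_R1: "norm z < 1/2 \<Longrightarrow> good (Some z)"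
proof -
  have "\<forall>z. norm z < 1/2 \<longrightarrow> Some z \<notin> pmt_preim ex_F n Cset" for n
  proof (induction n)
    case 0 thus ?case by (auto simp: pmt_preim_def)
  next
    case (Suc n)
    show ?case
    proof (intro allI impI)
      fix z :: complex assume z: "norm z < 1/2"
      hence "norm (ex_omega * z) < 1/2" by (simp add: norm_mult omega_norm)
      hence "Some (ex_omega * z) \<notin> pmt_preim ex_F n Cset" using Suc by blast
      thus "Some z \<notin> pmt_preim ex_F (Suc n) Cset"
        using z by (simp add: pmt_preim_def iter_Suc_front step_R1)
    qed
  qed
  thus "norm z < 1/2 \<Longrightarrow> good (Some z)" unfolding good_def by blast
qed

definition Rbig :: real where "Rbig = norm z0 + 1"

lemma gmap_dist: "norm (gmap z - z0) = 10/9 * norm (z - z0)"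
  unfolding gmap_z0 by (simp add: norm_mult lambda_norm)

lemma far_big: "norm (z - z0) > Rbig \<Longrightarrow> norm z > 1"
  unfolding Rbig_def using norm_triangle_ineq4[of z z0] norm_diff_ineq[of z z0] by linarith

lemma good_far: "norm (z - z0) > Rbig \<Longrightarrow> good (Some z)" and good_None: "good None"
proof -
  have A: "\<forall>z. norm (z - z0) > Rbig \<longrightarrow> Some z \<notin> pmt_preim ex_F n Cset" for n
  proof (induction n)
    case 0 show ?case
    proof (intro allI impI)
      fix z assume "norm (z - z0) > Rbig"
      hence "norm z > 1" by (rule far_big)
      thus "Some z \<notin> pmt_preim ex_F 0 Cset" by (simp add: pmt_preim_def)
    qed
  next
    case (Suc n)
    show ?case
    proof (intro allI impI)
      fix z :: complex assume z: "norm (z - z0) > Rbig"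
      have "Rbig > 0" unfolding Rbig_def using norm_ge_zero[of z0] by linarith
      hence "norm (gmap z - z0) > Rbig" using z gmap_dist[of z] by linarith
      hence "Some (gmap z) \<notin> pmt_preim ex_F n Cset" using Suc by blast
      moreover have "norm z > 1/2" using far_big[OF z] by simp
      ultimately show "Some z \<notin> pmt_preim ex_F (Suc n) Cset"
        by (simp add: pmt_preim_def iter_Suc_front step_R2)
    qed
  qed
  thus "norm (z - z0) > Rbig \<Longrightarrow> good (Some z)" unfolding good_def by blast
  have "None \<notin> pmt_preim ex_F n Cset" for n
  proof (induction n)
    case 0 thus ?case by (simp add: pmt_preim_def)
  next
    case (Suc n) thus ?case by (simp add: pmt_preim_def iter_Suc_front step_None)
  qed
  thus "good None" unfolding good_def by blast
qed

definition Pset :: "sphere set" where "Pset = (\<Union>n. pmt_preim ex_F n (pmt_B ex_F))"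

lemma good_iff: "good p \<longleftrightarrow> p \<notin> Pset"
  unfolding good_def Pset_def B_eq by blast

lemma gmap_iter: "(gmap ^^ m) w - z0 = (- ex_lambda)^m * (w - z0)"
proof (induction m)
  case 0 thus ?case by simp
next
  case (Suc m)
  have "(gmap ^^ Suc m) w - z0 = gmap ((gmap ^^ m) w) - z0" by simp
  also have "\<dots> = - ex_lambda * ((gmap ^^ m) w - z0)" by (rule gmap_z0)
  finally show ?case using Suc by simp
qed

lemma gmap_cont: "continuous (at x) gmap"
  unfolding gmap_def by (intro continuous_intros)

lemma nbhd_good:
  "\<forall>w. norm ((gmap ^^ m) w - z0) > Rbig \<longrightarrow> good (Some w) \<longrightarrow>
      (\<exists>V. open V \<and> w \<in> V \<and> (\<forall>y\<in>V. good (Some y)))"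
proof (induction m)
  case 0
  show ?case
  proof (intro allI impI)
    fix w assume w: "norm ((gmap ^^ 0) w - z0) > Rbig"
    let ?V = "{y. norm (y - z0) > Rbig}"
    have "open ?V" by (intro open_Collect_less continuous_intros)
    moreover have "w \<in> ?V" using w by simp
    moreover have "\<forall>y\<in>?V. good (Some y)" using good_far by blast
    ultimately show "\<exists>V. open V \<and> w \<in> V \<and> (\<forall>y\<in>V. good (Some y))" by blast
  qed
next
  case (Suc m)
  show ?case
  proof (intro allI impI)
    fix w assume w: "norm ((gmap ^^ Suc m) w - z0) > Rbig" and g: "good (Some w)"
    consider "norm w < 1/2" | "norm w = 1/2" | "norm w > 1/2" by linarith
    thus "\<exists>V. open V \<and> w \<in> V \<and> (\<forall>y\<in>V. good (Some y))"
    proof cases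
      case 1
      thus ?thesis using good_R1
        by (intro exI[of _ "ball 0 (1/2)"]) auto
    next
      case 2
      hence "Some w \<in> Pset" unfolding Pset_def B_eq pmt_preim_def
        by (intro UnI1 UN_I[of 0]) auto
      thus ?thesis using g good_iff by blast
    next
      case 3
      have st: "pmt_step ex_F (Some w) = Some (Some (gmap w))" using 3 by (rule step_R2)
      have g': "good (Some (gmap w))" using good_step_back[OF g st] .
      have "norm ((gmap ^^ m) (gmap w) - z0) > Rbig"
        using w by (simp add: funpow_Suc_right del: funpow.simps)
      then obtain V where V: "open V" "gmap w \<in> V" "\<forall>y\<in>V. good (Some y)"
        using Suc g' by blast
      let ?V' = "gmap -` V \<inter> {y. norm y > 1/2}"
      have "open ?V'"
        by (intro open_Int continuous_open_vimage V(1) gmap_cont open_Collect_less continuous_intros)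
      moreover have "w \<in> ?V'" using V(2) 3 by simp
      moreover have "\<forall>y\<in>?V'. good (Some y)"
      proof
        fix y assume y: "y \<in> ?V'"
        show "good (Some y)"
          by (rule good_step[OF _ step_R2]) (use y V(3) in auto)
      qed
      ultimately show ?thesis by blast
    qed
  qed
qed

lemma escape: "w \<noteq> z0 \<Longrightarrow> \<exists>m. norm ((gmap ^^ m) w - z0) > Rbig"
proof -
  assume "w \<noteq> z0"
  hence pos: "norm (w - z0) > 0" by simp
  obtain m where m: "Rbig / norm (w - z0) < (10/9::real)^m"
    using real_arch_pow[of "10/9"] by auto
  have "norm ((gmap ^^ m) w - z0) = (10/9)^m * norm (w - z0)"
    unfolding gmap_iter by (simp add: norm_mult norm_power lambda_norm)
  also have "\<dots> > Rbig" using m pos by (simp add: field_simps)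
  finally show ?thesis by blast
qed

lemma some_open: "open V \<Longrightarrow> openin sphere_top (Some ` V)"
  unfolding openin_sphere_top sphere_open_def
  by (simp add: image_iff)

lemma closure_not_P:
  assumes x: "x \<in> sphere_top closure_of Pset" and nx: "x \<notin> Pset"
  shows "x = Some z0"
proof (rule ccontr)
  assume ne: "x \<noteq> Some z0"
  have cl: "\<And>T. x \<in> T \<Longrightarrow> openin sphere_top T \<Longrightarrow> \<exists>y. y \<in> Pset \<and> y \<in> T"
    using x unfolding in_closure_of by blast
  show False
  proof (cases x)
    case None
    let ?W = "insert None (Some ` {y. norm (y - z0) > Rbig})"
    have "openin sphere_top ?W"
      unfolding openin_sphere_top sphere_open_def
    proof (intro conjI impI)
      have "{z. Some z \<in> ?W} = {y. norm (y - z0) > Rbig}" by auto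
      thus "open {z. Some z \<in> ?W}" by (simp add: open_Collect_less continuous_intros)
      show "\<exists>r. \<forall>z. norm z > r \<longrightarrow> Some z \<in> ?W"
      proof (intro exI[of _ "Rbig + norm z0"] allI impI)
        fix z :: complex assume "norm z > Rbig + norm z0"
        hence "norm (z - z0) > Rbig" using norm_triangle_ineq2[of z z0] by linarith
        thus "Some z \<in> ?W" by simp
      qed
    qed
    then obtain y where "y \<in> Pset" "y \<in> ?W" using cl None by blast
    thus False using good_far good_None good_iff by auto
  next
    case (Some w)
    hence "w \<noteq> z0" using ne by simp
    then obtain m where "norm ((gmap ^^ m) w - z0) > Rbig" using escape by blast
    moreover have "good (Some w)" using nx Some good_iff by simp
    ultimately obtain V where V: "open V" "w \<in> V" "\<forall>y\<in>V. good (Some y)"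
      using nbhd_good by blast
    obtain y where "y \<in> Pset" "y \<in> Some ` V" using cl[OF _ some_open[OF V(1)]] V(2) Some by blast
    thus False using V(3) good_iff by auto
  qed
qed

lemma gmap_fix: "gmap z0 = z0"
  using gmap_z0[of z0] by simp

lemma z0_good: "good (Some z0)"
proof -
  have it: "pmt_iter ex_F n (Some z0) = Some (Some z0)" for n
  proof (induction n)
    case 0 thus ?case by simp
  next
    case (Suc n) thus ?case using z0_norm by (simp add: iter_Suc_front step_R2 gmap_fix)
  qed
  have "Some z0 \<notin> Cset" using z0_norm by simp
  thus ?thesis unfolding good_def pmt_preim_def using it by auto
qed

lemma z0_notP: "Some z0 \<notin> Pset" using z0_good good_iff by blast

lemma z0_closure: "Some z0 \<in> sphere_top closure_of Pset"
proof -
  define t where "t = 1 - 1 / (2 * norm z0)"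
  have a: "0 < 1/(2*norm z0)" "1/(2*norm z0) < 1" using z0_norm by (auto simp: divide_less_eq)
  have t: "0 < t" "t < 1" using a unfolding t_def by auto
  have z0ne: "z0 \<noteq> 0" using z0_norm by auto
  define h where "h k = z0 - of_real t * z0 / (- ex_lambda)^k" for k :: nat
  have lne: "- ex_lambda \<noteq> 0" using lambda_ne0 by simp
  have nl: "norm ((- ex_lambda)^k) = (10/9)^k" for k by (simp add: norm_power lambda_norm)
  have h0: "norm (h 0) = 1/2"
  proof -
    have h0e: "h 0 = of_real (1 - t) * z0" unfolding h_def by (simp add: algebra_simps)
    have "norm (h 0) = abs (1 - t) * norm z0" unfolding h0e norm_mult norm_of_real ..
    hence "norm (h 0) = (1 - t) * norm z0" using t by simp
    thus ?thesis unfolding t_def using z0_norm z0ne by (simp add: field_simps)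
  qed
  have hstep: "gmap (h (Suc k)) = h k" for k
  proof -
    have "gmap (h (Suc k)) - z0 = - ex_lambda * (h (Suc k) - z0)" by (rule gmap_z0)
    also have "\<dots> = h k - z0" unfolding h_def using lne by (simp add: field_simps)
    finally show ?thesis by simp
  qed
  have hdist: "norm (h k - z0) = t * norm z0 / (10/9)^k" for k
    unfolding h_def using t by (simp add: norm_mult norm_divide nl)
  have hbig: "norm (h (Suc k)) > 1/2" for k
  proof -
    have "h (Suc k) = z0 * (1 - of_real t / (- ex_lambda)^Suc k)" unfolding h_def
      by (simp add: algebra_simps)
    hence "norm (h (Suc k)) = norm z0 * norm (1 - of_real t / (- ex_lambda)^Suc k)"
      by (simp add: norm_mult)
    moreover have "norm (1 - of_real t / (- ex_lambda)^Suc k) \<ge> 1 - t / (10/9)^Suc k"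
    proof -
      have "norm (of_real t / (- ex_lambda)^Suc k) = t / (10/9)^Suc k"
        unfolding norm_divide nl norm_of_real using t by simp
      thus ?thesis using norm_triangle_ineq2[of 1 "of_real t / (- ex_lambda)^Suc k"] by simp
    qed
    moreover have "t / (10/9)^Suc k < t"
    proof -
      have "(1::real) < (10/9)^Suc k" by (rule one_less_power) auto
      thus ?thesis using t by (simp add: field_simps)
    qed
    ultimately have "norm (1 - of_real t / (- ex_lambda)^Suc k) > 1 - t" by linarith
    hence "norm z0 * norm (1 - of_real t / (- ex_lambda)^Suc k) > norm z0 * (1 - t)"
      using z0_norm by (intro mult_strict_left_mono) auto
    hence "norm (h (Suc k)) > norm z0 * (1 - t)"
      using \<open>norm (h (Suc k)) = _\<close> by linarith
    moreover have "norm z0 * (1 - t) = 1/2" unfolding t_def using z0_norm z0ne by (simp add: field_simps)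
    ultimately show ?thesis by simp
  qed
  have hit: "pmt_iter ex_F k (Some (h k)) = Some (Some (h 0))" for k
  proof (induction k)
    case 0 thus ?case by simp
  next
    case (Suc k) thus ?case by (simp add: iter_Suc_front step_R2[OF hbig] hstep)
  qed
  have hP: "Some (h k) \<in> Pset" for k
  proof -
    have "Some (h 0) \<in> Cset" using h0 by simp
    thus ?thesis unfolding Pset_def B_eq pmt_preim_def using hit[of k] by blast
  qed
  show ?thesis unfolding in_closure_of
  proof (intro conjI allI impI)
    show "Some z0 \<in> topspace sphere_top" by simp
    fix T assume T: "Some z0 \<in> T \<and> openin sphere_top T"
    hence "open {w. Some w \<in> T}" "z0 \<in> {w. Some w \<in> T}"
      by (auto simp: openin_sphere_top sphere_open_def)
    then obtain e where e: "e > 0" "ball z0 e \<subseteq> {w. Some w \<in> T}" by (meson openE)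
    obtain k where k: "t * norm z0 / e < (10/9::real)^k" using real_arch_pow[of "10/9"] by auto
    have "norm (h k - z0) < e" unfolding hdist using k e(1) by (simp add: field_simps)
    hence "Some (h k) \<in> T" using e(2) by (auto simp: dist_norm norm_minus_commute)
    thus "\<exists>y. y \<in> Pset \<and> y \<in> T" using hP by blast
  qed
qed

lemma alpha_eq: "pmt_alpha ex_F = {Some z0}"
proof -
  have "pmt_alpha ex_F = sphere_top closure_of Pset - Pset"
    unfolding pmt_alpha_def pmt_calB_def Pset_def ..
  thus ?thesis using closure_not_P z0_closure z0_notP by blast
qed

lemma moeb_comp_id: "moeb_comp M moeb_id = M"
  by (cases M) (simp add: moeb_id_def)

lemma orbit1: "pmt_orbit_moeb F (Suc 0) z = pmt_map F z"
  by (simp add: moeb_comp_id)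

lemma iter1: "pmt_iter F (Suc 0) z = pmt_step F z"
  by (simp add: iter_Suc_front split: option.split)

lemma loc_deriv_fin:
  assumes "c * z + d \<noteq> 0"
  shows "moeb_loc_deriv (a, b, c, d) (Some z) = (a * d - b * c) / (c * z + d)^2"
proof -
  have "((\<lambda>w. (a * w + b) / (c * w + d)) has_field_derivative (a * d - b * c) / (c * z + d)^2) (at z)"
    using assms
    by (auto intro!: derivative_eq_intros simp: field_simps power2_eq_square)
  hence "deriv (\<lambda>w. (a * w + b) / (c * w + d)) z = (a * d - b * c) / (c * z + d)^2"
    by (rule DERIV_imp_deriv)
  thus ?thesis using assms by simp
qed

lemma periodic1: "periodic_point F z 1 \<longleftrightarrow> z \<in> pmt_R F \<and> pmt_step F z = Some z"
  unfolding periodic_point_def orbit_in_R_def by (auto simp: iter1)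

lemma R1_0: "Some 0 \<in> ex_R1" by simp

lemma z0_R2: "Some z0 \<in> ex_R2" using z0_norm by simp

lemma not_id_0: "\<not> identity_type ex_F (Some 0) 1"
proof
  assume "identity_type ex_F (Some 0) 1"
  then obtain U where U: "openin sphere_top U" "Some 0 \<in> U" "\<forall>w\<in>U. pmt_iter ex_F 1 w = Some w"
    unfolding identity_type_def by blast
  have "open {w. Some w \<in> U}" "0 \<in> {w. Some w \<in> U}"
    using U(1,2) by (auto simp: openin_sphere_top sphere_open_def)
  then obtain e where e: "e > 0" "ball 0 e \<subseteq> {w. Some w \<in> U}" by (meson openE)
  define r where "r = min e (1/2) / 2"
  have r: "0 < r" "r < e" "r < 1/2" using e(1) unfolding r_def by auto
  define y where "y = complex_of_real r"
  have ny: "norm y = r" unfolding y_def using r by simp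
  hence "Some y \<in> U" using e(2) r by auto
  hence "pmt_iter ex_F 1 (Some y) = Some (Some y)" using U(3) by blast
  moreover have "pmt_iter ex_F 1 (Some y) = Some (Some (ex_omega * y))"
    using ny r by (simp add: iter1 step_R1)
  ultimately have "ex_omega * y = 1 * y" by simp
  moreover have "y \<noteq> 0" using ny r by auto
  ultimately show False using omega_ne1 by (metis mult_right_cancel)
qed

lemma not_id_z0: "\<not> identity_type ex_F (Some z0) 1"
proof
  assume "identity_type ex_F (Some z0) 1"
  then obtain U where U: "openin sphere_top U" "Some z0 \<in> U" "\<forall>w\<in>U. pmt_iter ex_F 1 w = Some w"
    unfolding identity_type_def by blast
  have "open {w. Some w \<in> U}" "z0 \<in> {w. Some w \<in> U}"
    using U(1,2) by (auto simp: openin_sphere_top sphere_open_def)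
  then obtain e where e: "e > 0" "ball z0 e \<subseteq> {w. Some w \<in> U}" by (meson openE)
  define r where "r = min e (norm z0 - 1/2) / 2"
  have r: "0 < r" "r < e" "r < norm z0 - 1/2" using e(1) z0_norm unfolding r_def by auto
  define y where "y = z0 + complex_of_real r"
  have ny: "norm (y - z0) = r" unfolding y_def using r by simp
  hence "Some y \<in> U" using e(2) r by (auto simp: dist_norm norm_minus_commute)
  hence "pmt_iter ex_F 1 (Some y) = Some (Some y)" using U(3) by blast
  moreover have "norm y > 1/2" using ny r norm_triangle_ineq2[of z0 "z0 - y"] by (simp add: norm_minus_commute)
  hence "pmt_iter ex_F 1 (Some y) = Some (Some (gmap y))"
    by (simp add: iter1 step_R2)
  ultimately have "gmap y = y" by simp
  hence "(ex_lambda + 1) * (y - z0) = 0" using gmap_z0[of y] by (simp add: algebra_simps)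
  moreover have "y \<noteq> z0" using ny r by auto
  ultimately show False using lambda1_ne0 by simp
qed

lemma mult_0: "pp_multiplier ex_F (Some 0) 1 = ex_omega"
  unfolding pp_multiplier_def moeb_multiplier_def One_nat_def orbit1 map_R1[OF R1_0]
  by (subst loc_deriv_fin) auto

lemma mult_z0: "pp_multiplier ex_F (Some z0) 1 = - ex_lambda"
  unfolding pp_multiplier_def moeb_multiplier_def One_nat_def orbit1 map_R2[OF z0_R2]
  by (subst loc_deriv_fin) auto

lemma elliptic_0: "elliptic_pp ex_F (Some 0) 1"
  unfolding elliptic_pp_def periodic1 mult_0
  using not_id_0 omega_norm omega_ne1 by (simp add: pmt_R_eq step_R1)

lemma repelling_z0: "repelling_pp ex_F (Some z0) 1"
  unfolding repelling_pp_def periodic1 mult_z0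
  using not_id_z0 z0_R2 z0_norm by (simp add: pmt_R_eq step_R2 gmap_fix lambda_norm)

lemma alpha_exp: "alpha_expanding ex_F"
  unfolding alpha_expanding_def alpha_eq
proof (intro exI[of _ 1] conjI ballI)
  fix z assume "z \<in> {Some z0}"
  hence z: "z = Some z0" by simp
  have app: "moeb_app (- ex_lambda, ex_lambda, 0, 1) (Some z0) = Some z0"
    using gmap_fix by (simp add: gmap_def algebra_simps)
  have "sph_deriv (pmt_orbit_moeb ex_F 1 z) z = 10/9"
    unfolding z sph_deriv_def One_nat_def orbit1 map_R2[OF z0_R2] app
  proof (subst loc_deriv_fin)
    have "(norm (coord (Some z0)))^2 \<ge> 0" by simp
    hence pos: "1 + (norm (coord (Some z0)))^2 \<noteq> 0" by linarith
    have A: "norm ((- ex_lambda * 1 - ex_lambda * 0) / (0 * z0 + 1)\<^sup>2) = 10/9"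
      by (simp add: lambda_norm)
    show "norm ((- ex_lambda * 1 - ex_lambda * 0) / (0 * z0 + 1)\<^sup>2) * (1 + (norm (coord (Some z0)))\<^sup>2) /
        (1 + (norm (coord (Some z0)))\<^sup>2) = 10 / 9" by (simp only: A nonzero_mult_div_cancel_right[OF pos])
  qed simp
  thus "sph_deriv (pmt_orbit_moeb ex_F 1 z) z > 1" by simp
qed simp

lemma not_hyp: "\<not> pmt_hyperbolic ex_F"
  unfolding pmt_hyperbolic_def using elliptic_0 by blast

lemma R1_closure_disj: "ex_R1 \<inter> sphere_top closure_of Pset = {}"
proof (rule ccontr)
  assume "ex_R1 \<inter> sphere_top closure_of Pset \<noteq> {}"
  then obtain x where x: "x \<in> ex_R1" "x \<in> sphere_top closure_of Pset" by blast
  then obtain y where y: "y \<in> Pset" "y \<in> ex_R1" using R1_open unfolding in_closure_of by blast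
  then obtain w where "y = Some w" "norm w < 1/2" by (cases y) auto
  thus False using good_R1 good_iff y(1) by blast
qed

lemma C_closure: "Cset \<subseteq> sphere_top closure_of Pset"
proof -
  have "Cset \<subseteq> Pset" unfolding Pset_def B_eq pmt_preim_def
    by (intro subsetI UN_I[of 0]) auto
  thus ?thesis using closure_of_subset[of Pset sphere_top] by auto
qed

lemma Some_cont: "continuous_map euclidean sphere_top Some"
  unfolding continuous_map_def
proof (intro conjI allI impI)
  show "Some \<in> topspace euclidean \<rightarrow> topspace sphere_top" by simp
  fix U assume "openin sphere_top U"
  hence "open {z. Some z \<in> U}" by (simp add: openin_sphere_top sphere_open_def)
  thus "openin euclidean {x \<in> topspace euclidean. Some x \<in> U}" by simp
qed

lemma R1_connected: "connectedin sphere_top ex_R1"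
proof -
  have "ex_R1 = Some ` ball 0 (1/2)" by (auto simp: ex_R1_def)
  thus ?thesis using connectedin_continuous_map_image[OF Some_cont, of "ball 0 (1/2)"]
    by simp
qed

lemma R1_component: "ex_R1 \<in> regular_components ex_F"
proof -
  define X where "X = subtopology sphere_top (regular_set ex_F)"
  have reg: "regular_set ex_F = UNIV - sphere_top closure_of Pset"
    by (simp only: regular_set_def pmt_calB_def Pset_def)
  have R1reg: "ex_R1 \<subseteq> regular_set ex_F" using R1_closure_disj reg by blast
  have top: "topspace X = regular_set ex_F" unfolding X_def by simp
  define K where "K = connected_component_of_set X (Some 0)"
  have "Some 0 \<in> topspace X" using R1reg top R1_0 by blast
  hence Kc: "K \<in> connected_components_of X" unfolding K_def
    by (simp add: connected_component_in_connected_components_of)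
  have "connectedin X ex_R1" unfolding X_def connectedin_subtopology
    using R1_connected R1reg by blast
  hence sub1: "ex_R1 \<subseteq> K" unfolding K_def by (rule connected_component_of_maximal[OF _ R1_0])
  have "connectedin X K" unfolding K_def by (rule connectedin_connected_component_of)
  hence Kcon: "connectedin sphere_top K" and Kreg: "K \<subseteq> regular_set ex_F"
    unfolding X_def connectedin_subtopology by auto
  have "K \<subseteq> ex_R1 \<union> ex_R2"
  proof
    fix p assume "p \<in> K"
    hence "p \<in> regular_set ex_F" by (rule subsetD[OF Kreg])
    hence "p \<notin> Cset" using reg C_closure by blast
    thus "p \<in> ex_R1 \<union> ex_R2"
    proof (cases p)
      case (Some w)
      hence "norm w \<noteq> 1/2" using \<open>p \<notin> Cset\<close> by simp
      hence "norm w < 1/2 \<or> norm w > 1/2" by linarith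
      thus ?thesis using Some by simp
    qed simp
  qed
  moreover have "ex_R1 \<inter> ex_R2 \<inter> K = {}" using R1_R2_disj by blast
  moreover have "ex_R1 \<inter> K \<noteq> {}" using sub1 R1_0 by blast
  moreover note R1_open R2_open
  moreover note nc = connectedin[THEN iffD1, OF Kcon, THEN conjunct2]
  have "\<not> (openin sphere_top ex_R1 \<and> openin sphere_top ex_R2 \<and> K \<subseteq> ex_R1 \<union> ex_R2 \<and>
          ex_R1 \<inter> ex_R2 \<inter> K = {} \<and> ex_R1 \<inter> K \<noteq> {} \<and> ex_R2 \<inter> K \<noteq> {})"
    by (rule notI, rule notE[OF nc], rule exI[of _ ex_R1], rule exI[of _ ex_R2], assumption)
  ultimately have "ex_R2 \<inter> K = {}" by blast
  hence "K \<subseteq> ex_R1" using \<open>K \<subseteq> ex_R1 \<union> ex_R2\<close> by blast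
  hence "K = ex_R1" using sub1 by blast
  thus ?thesis using Kc unfolding regular_components_def X_def by simp
qed

lemma rot_R1: "rotation_domain ex_F ex_R1"
  unfolding rotation_domain_def
proof (intro conjI R1_component exI[of _ 1] exI[of _ "(ex_omega, 0, 0, 1)"] omega_elliptic allI impI ballI)
  show "pmt_img ex_F 1 ex_R1 \<subseteq> ex_R1"
  proof
    fix p assume "p \<in> pmt_img ex_F 1 ex_R1"
    then obtain z where z: "z \<in> ex_R1" "pmt_iter ex_F 1 z = Some p" unfolding pmt_img_def by blast
    then obtain w where w: "z = Some w" "norm w < 1/2" by (cases z) auto
    have "p = Some (ex_omega * w)" using z(2) w by (simp add: iter1 step_R1)
    thus "p \<in> ex_R1" using w by (simp add: norm_mult omega_norm)
  qed
  fix z assume "z \<in> ex_R1"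
  then obtain w where w: "z = Some w" "norm w < 1/2" by (cases z) auto
  show "pmt_iter ex_F 1 z = Some (moeb_app (ex_omega, 0, 0, 1) z)"
    using w by (simp add: iter1 step_R1)
qed auto

theorem mainTheorem6:
  shows "elliptic_pp ex_F (Some 0) 1 \<and> rotation_domain ex_F ex_R1 \<and>
         repelling_pp ex_F (Some (ex_lambda / (ex_lambda + 1))) 1 \<and>
         pmt_alpha ex_F = {Some (ex_lambda / (ex_lambda + 1))} \<and>
         alpha_expanding ex_F \<and> \<not> pmt_hyperbolic ex_F"
  using elliptic_0 rot_R1 repelling_z0 alpha_eq alpha_exp not_hyp unfolding z0_def by blast

end
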